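(* Let $\Phi=\{\varphi_i\}_{i=1}^K$ be a homogeneous IFS on $\mathbb R^d$ with common contraction ratio $r\in(0,1)$ satisfying the strong separation condition, with self-similar set $X$, coding map $\pi:\Sigma\to X$ and induced map $T:X\to X$. Let $\psi:\mathbb N\to[0,\infty)$. Then there exists $N\in\mathbb N$ depending only on $\Phi$ such that $$\pi\big(R_{\lfloor\psi\rfloor+N}\big)\subseteq\tilde R_\psi\subseteq\pi\big(R_{\lfloor\psi\rfloor-N}\big).$$
   Context: A contracting similarity is a map $\varphi:\mathbb R^d\to\mathbb R^d$ with $\|\varphi(x)-\varphi(y)\|=r\|x-y\|$ for some $r\in(0,1)$; an IFS is a finite set $\Phi=\{\varphi_i\}_{i=1}^K$ of contracting similarities, homogeneous if all have the same ratio $r$. Its self-similar set is the unique nonempty compact $X$ with $X=\bigcup_i\varphi_i(X)$. With $\Sigma=\{1,\dots,K\}^{\mathbb N}$, $\pi(\mathbf i)=\lim_{n\to\infty}\varphi_{i_1}\circ\cdots\circ\varphi_{i_n}(0)$. $\Phi$ satisfies the strong separation condition if $\varphi_i(X)\cap\varphi_j(X)=\emptyset$ for $i\ne j$; then $T(x)=\varphi_i^{-1}(x)$ for $x\in\varphi_i(X)$. $\tilde R_\psi=\{x\in X:\|T^n(x)-x\|\le r^{\psi(n)}\text{ for infinitely many }n\in\mathbb N\}$ (Euclidean norm). On $\Sigma$, $|\mathbf i\wedge\mathbf j|=\inf\{n\ge0:i_{n+1}\ne j_{n+1}\}$, $d(\mathbf i,\mathbf j)=K^{-|\mathbf i\wedge\mathbf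 j|}$, $\sigma$ is the left shift, and for an integer-valued function $\phi$ on $\mathbb N$, $R_\phi=\{\mathbf i\in\Sigma:d(\sigma^n\mathbf i,\mathbf i)\le K^{-\phi(n)}\text{ for infinitely many }n\}$; here $\lfloor\psi\rfloor\pm N$ denotes $n\mapsto\lfloor\psi(n)\rfloor\pm N$. *)

theory Defs
  imports "HOL-Analysis.Analysis"
begin

text \<open>An IFS is given by maps phi 0, ..., phi (K-1) (0-based indexing).
  Symbolic space Sigma = sequences with values in {0..<K}; the sequence value at
  position k corresponds to the letter i_(k+1) of the paper.\<close>

definition homogeneous_ifs :: "nat \<Rightarrow> (nat \<Rightarrow> 'a::euclidean_space \<Rightarrow> 'a) \<Rightarrow> real \<Rightarrow> bool" where
  "homogeneous_ifs K \<phi> r \<longleftrightarrow> K \<ge> 1 \<and> 0 < r \<and> r < 1 \<and>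
     (\<forall>i<K. \<forall>x y. dist (\<phi> i x) (\<phi> i y) = r * dist x y)"

definition self_similar_set :: "nat \<Rightarrow> (nat \<Rightarrow> 'a::euclidean_space \<Rightarrow> 'a) \<Rightarrow> 'a set \<Rightarrow> bool" where
  "self_similar_set K \<phi> X \<longleftrightarrow> compact X \<and> X \<noteq> {} \<and> X = (\<Union>i<K. \<phi> i ` X)"

definition strong_separation :: "nat \<Rightarrow> (nat \<Rightarrow> 'a \<Rightarrow> 'a) \<Rightarrow> 'a set \<Rightarrow> bool" where
  "strong_separation K \<phi> X \<longleftrightarrow>
     (\<forall>i<K. \<forall>j<K. i \<noteq> j \<longrightarrow> \<phi> i ` X \<inter> \<phi> j ` X = {})"

definition code_space :: "nat \<Rightarrow> (nat \<Rightarrow> nat) set" where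
  "code_space K = {w. \<forall>k. w k < K}"

fun ifs_comp :: "(nat \<Rightarrow> 'a \<Rightarrow> 'a) \<Rightarrow> (nat \<Rightarrow> nat) \<Rightarrow> nat \<Rightarrow> 'a \<Rightarrow> 'a" where
  "ifs_comp \<phi> w 0 = id"
| "ifs_comp \<phi> w (Suc n) = ifs_comp \<phi> w n \<circ> \<phi> (w n)"

definition coding_map :: "(nat \<Rightarrow> 'a::euclidean_space \<Rightarrow> 'a) \<Rightarrow> (nat \<Rightarrow> nat) \<Rightarrow> 'a" where
  "coding_map \<phi> w = lim (\<lambda>n. ifs_comp \<phi> w n 0)"

definition induced_map :: "nat \<Rightarrow> (nat \<Rightarrow> 'a \<Rightarrow> 'a) \<Rightarrow> 'a set \<Rightarrow> 'a \<Rightarrow> 'a" where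
  "induced_map K \<phi> X x = inv (\<phi> (THE i. i < K \<and> x \<in> \<phi> i ` X)) x"

definition sym_dist :: "nat \<Rightarrow> (nat \<Rightarrow> nat) \<Rightarrow> (nat \<Rightarrow> nat) \<Rightarrow> real" where
  "sym_dist K w v = (if w = v then 0 else real K powi (- int (LEAST n. w n \<noteq> v n)))"

definition shift :: "(nat \<Rightarrow> nat) \<Rightarrow> (nat \<Rightarrow> nat)" where
  "shift w = (\<lambda>k. w (Suc k))"

definition sym_recurrence_set :: "nat \<Rightarrow> (nat \<Rightarrow> int) \<Rightarrow> (nat \<Rightarrow> nat) set" where
  "sym_recurrence_set K f = {w \<in> code_space K.
      infinite {n. sym_dist K ((shift ^^ n) w) w \<le> real K powi (- f n)}}"

definition recurrence_set ::
  "nat \<Rightarrow> (nat \<Rightarrow> 'a::euclidean_space \<Rightarrow> 'a) \<Rightarrow> real \<Rightarrow> 'a set \<Rightarrow> (nat \<Rightarrow> real) \<Rightarrow> 'a set" where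
  "recurrence_set K \<phi> r X \<psi> = {x \<in> X.
      infinite {n. norm ((induced_map K \<phi> X ^^ n) x - x) \<le> r powr (\<psi> n)}}"

end

theory Submission
  imports Defs
begin

locale ssifs =
  fixes K :: nat and \<phi> :: "nat \<Rightarrow> 'a::euclidean_space \<Rightarrow> 'a" and r :: real and X :: "'a set"
  assumes hom: "homogeneous_ifs K \<phi> r"
    and ss: "self_similar_set K \<phi> X"
    and sep: "strong_separation K \<phi> X"
begin

lemma K1: "K \<ge> 1" and r0: "0 < r" and r1: "r < 1"
  using hom unfolding homogeneous_ifs_def by auto

lemma sim: "i < K \<Longrightarrow> dist (\<phi> i x) (\<phi> i y) = r * dist x y"
  using hom unfolding homogeneous_ifs_def by auto

lemma Xcomp: "compact X" and Xne: "X \<noteq> {}" and Xeq: "X = (\<Union>i<K. \<phi> i ` X)"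
  using ss unfolding self_similar_set_def by auto

lemma phiX: "i < K \<Longrightarrow> x \<in> X \<Longrightarrow> \<phi> i x \<in> X"
  using Xeq by blast

lemma shift_pow: "(shift ^^ n) w k = w (n + k)"
  by (induction n arbitrary: k) (auto simp: shift_def)

lemma cs_shift: "w \<in> code_space K \<Longrightarrow> (shift ^^ n) w \<in> code_space K"
  by (simp add: code_space_def shift_pow)

lemma comp_dist: "w \<in> code_space K \<Longrightarrow>
   dist (ifs_comp \<phi> w n x) (ifs_comp \<phi> w n y) = r ^ n * dist x y"
  by (induction n arbitrary: x y) (auto simp: sim code_space_def)

lemma comp_X: "w \<in> code_space K \<Longrightarrow> x \<in> X \<Longrightarrow> ifs_comp \<phi> w n x \<in> X"
  by (induction n arbitrary: x) (auto simp: phiX code_space_def)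

lemma comp_add: "ifs_comp \<phi> w (n + m) = ifs_comp \<phi> w n \<circ> ifs_comp \<phi> ((shift ^^ n) w) m"
  by (induction m) (auto simp: shift_pow comp_assoc)

lemma comp_cong: "(\<forall>k<n. v k = w k) \<Longrightarrow> ifs_comp \<phi> v n = ifs_comp \<phi> w n"
  by (induction n) auto

lemma Xbdd: "bounded X" using Xcomp compact_imp_bounded by blast

definition D where "D = diameter X"

lemma D0: "0 \<le> D" unfolding D_def using Xbdd diameter_ge_0 by blast

lemma Dle: "x \<in> X \<Longrightarrow> y \<in> X \<Longrightarrow> dist x y \<le> D"
  unfolding D_def using Xbdd diameter_bounded_bound by blast

lemma conv: assumes w: "w \<in> code_space K"
  shows "(\<lambda>n. ifs_comp \<phi> w n 0) \<longlonglongrightarrow> coding_map \<phi> w"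
proof -
  obtain x0 where x0: "x0 \<in> X" using Xne by blast
  obtain B where B: "\<forall>x\<in>X. norm x \<le> B" using Xbdd bounded_iff by blast
  define C where "C = norm x0 + B"
  have C0: "0 \<le> C" using B x0 C_def by (smt (verit) norm_ge_zero)
  have bnd: "norm (ifs_comp \<phi> v m 0) \<le> C" if v: "v \<in> code_space K" for v m
  proof -
    have "norm (ifs_comp \<phi> v m 0) \<le> dist (ifs_comp \<phi> v m 0) (ifs_comp \<phi> v m x0) + norm (ifs_comp \<phi> v m x0)"
      using norm_triangle_sub[of "ifs_comp \<phi> v m 0" "ifs_comp \<phi> v m x0"]
      unfolding dist_norm by linarith
    also have "dist (ifs_comp \<phi> v m 0) (ifs_comp \<phi> v m x0) = r ^ m * norm x0"
      using comp_dist[OF v] by (simp add: dist_norm)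
    finally have 1: "norm (ifs_comp \<phi> v m 0) \<le> r ^ m * norm x0 + norm (ifs_comp \<phi> v m x0)" .
    have 2: "r ^ m * norm x0 \<le> norm x0"
      using r0 r1 by (simp add: mult_left_le_one_le power_le_one)
    have 3: "norm (ifs_comp \<phi> v m x0) \<le> B" using B comp_X[OF v x0] by blast
    show ?thesis unfolding C_def using 1 2 3 by linarith
  qed
  have step: "dist (ifs_comp \<phi> w a 0) (ifs_comp \<phi> w b 0) \<le> r ^ a * C" if "a \<le> b" for a b
  proof -
    obtain m where b: "b = a + m" using \<open>a \<le> b\<close> le_Suc_ex by blast
    have "dist (ifs_comp \<phi> w a 0) (ifs_comp \<phi> w b 0)
        = dist (ifs_comp \<phi> w a 0) (ifs_comp \<phi> w a (ifs_comp \<phi> ((shift ^^ a) w) m 0))"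
      by (simp add: b comp_add)
    also have "\<dots> = r ^ a * norm (ifs_comp \<phi> ((shift ^^ a) w) m 0)"
      using comp_dist[OF w] by (simp add: dist_norm norm_minus_commute)
    also have "\<dots> \<le> r ^ a * C"
      using bnd[OF cs_shift[OF w]] r0 by (simp add: mult_left_mono)
    finally show ?thesis .
  qed
  have "Cauchy (\<lambda>n. ifs_comp \<phi> w n 0)"
  proof (rule metric_CauchyI)
    fix e :: real assume e: "0 < e"
    have eC: "0 < e / (C + 1)" using e C0 by simp
    obtain M where M: "r ^ M < e / (C + 1)"
      using real_arch_pow_inv[OF eC r1] by blast
    have MC: "r ^ M * C < e"
    proof -
      have "r ^ M * C \<le> r ^ M * (C + 1)" using r0 by simp
      also have "\<dots> < e / (C + 1) * (C + 1)"
        using M C0 by (intro mult_strict_right_mono) auto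
      also have "\<dots> = e" using C0 by simp
      finally show ?thesis .
    qed
    have "dist (ifs_comp \<phi> w m 0) (ifs_comp \<phi> w n 0) < e" if "m \<ge> M" "n \<ge> M" for m n
    proof -
      have pw: "r ^ k * C \<le> r ^ M * C" if kM: "k \<ge> M" for k
      proof -
        have "r ^ k \<le> r ^ M" using kM r0 r1 by simp
        then show ?thesis using mult_right_mono C0 by blast
      qed
      show ?thesis
      proof (cases "m \<le> n")
        case True
        then show ?thesis using step[OF True] pw[OF \<open>m \<ge> M\<close>] MC by linarith
      next
        case False
        then have "n \<le> m" by simp
        then show ?thesis using step[OF \<open>n \<le> m\<close>] pw[OF \<open>n \<ge> M\<close>] MC
          by (simp add: dist_commute)
      qed
    qed
    then show "\<exists>M. \<forall>m\<ge>M. \<forall>n\<ge>M. dist (ifs_comp \<phi> w m 0) (ifs_comp \<phi> w n 0) < e" by blast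
  qed
  then show ?thesis
    unfolding coding_map_def using Cauchy_convergent_iff convergent_LIMSEQ_iff by blast
qed

lemma piX: assumes w: "w \<in> code_space K" shows "coding_map \<phi> w \<in> X"
proof -
  obtain x0 where x0: "x0 \<in> X" using Xne by blast
  have "(\<lambda>n. norm (ifs_comp \<phi> w n x0 - ifs_comp \<phi> w n 0)) = (\<lambda>n. r ^ n * norm x0)"
    using comp_dist[OF w] by (simp add: dist_norm del: comp_dist)
  moreover have "(\<lambda>n. r ^ n * norm x0) \<longlonglongrightarrow> 0"
    using r0 r1 by (intro tendsto_mult_left_zero LIMSEQ_power_zero) auto
  ultimately have "(\<lambda>n. norm (ifs_comp \<phi> w n x0 - ifs_comp \<phi> w n 0)) \<longlonglongrightarrow> 0"
    by simp
  then have "(\<lambda>n. ifs_comp \<phi> w n x0 - ifs_comp \<phi> w n 0) \<longlonglongrightarrow> 0"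
    by (rule iffD1[OF tendsto_norm_zero_iff])
  then have "(\<lambda>n. ifs_comp \<phi> w n x0) \<longlonglongrightarrow> coding_map \<phi> w"
    by (rule Lim_transform[OF conv[OF w]])
  then show ?thesis
    by (rule closed_sequentially[OF compact_imp_closed[OF Xcomp] comp_X[OF w x0]])
qed


lemma pi_comp: assumes w: "w \<in> code_space K"
  shows "coding_map \<phi> w = ifs_comp \<phi> w n (coding_map \<phi> ((shift ^^ n) w))"
proof -
  define v where "v = (shift ^^ n) w"
  have v: "v \<in> code_space K" using cs_shift[OF w] v_def by simp
  have l0: "(\<lambda>m. ifs_comp \<phi> w (m + n) 0) \<longlonglongrightarrow> coding_map \<phi> w"
    by (rule LIMSEQ_ignore_initial_segment[OF conv[OF w]])
  have feq: "(\<lambda>m. ifs_comp \<phi> w (m + n) 0) = (\<lambda>m. ifs_comp \<phi> w n (ifs_comp \<phi> v m 0))"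
  proof (rule ext)
    fix m
    have "ifs_comp \<phi> w (m + n) 0 = ifs_comp \<phi> w (n + m) 0" by (simp only: add.commute)
    then show "ifs_comp \<phi> w (m + n) 0 = ifs_comp \<phi> w n (ifs_comp \<phi> v m 0)"
      by (simp only: comp_add v_def o_apply)
  qed
  have l1: "(\<lambda>m. ifs_comp \<phi> w n (ifs_comp \<phi> v m 0)) \<longlonglongrightarrow> coding_map \<phi> w"
    using l0 unfolding feq .
  have "(\<lambda>m. dist (ifs_comp \<phi> v m 0) (coding_map \<phi> v)) \<longlonglongrightarrow> 0"
    by (rule iffD1[OF tendsto_dist_iff conv[OF v]])
  then have "(\<lambda>m. r ^ n * dist (ifs_comp \<phi> v m 0) (coding_map \<phi> v)) \<longlonglongrightarrow> 0"
    by (rule tendsto_mult_right_zero)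
  moreover have "(\<lambda>m. r ^ n * dist (ifs_comp \<phi> v m 0) (coding_map \<phi> v))
     = (\<lambda>m. dist (ifs_comp \<phi> w n (ifs_comp \<phi> v m 0)) (ifs_comp \<phi> w n (coding_map \<phi> v)))"
    by (rule ext) (rule comp_dist[OF w, symmetric])
  ultimately have "(\<lambda>m. dist (ifs_comp \<phi> w n (ifs_comp \<phi> v m 0)) (ifs_comp \<phi> w n (coding_map \<phi> v))) \<longlonglongrightarrow> 0"
    by simp
  then have "(\<lambda>m. ifs_comp \<phi> w n (ifs_comp \<phi> v m 0)) \<longlonglongrightarrow> ifs_comp \<phi> w n (coding_map \<phi> v)"
    by (rule iffD2[OF tendsto_dist_iff])
  from LIMSEQ_unique[OF l1 this] show ?thesis unfolding v_def .
qed

lemma pi_step: assumes w: "w \<in> code_space K"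
  shows "coding_map \<phi> w = \<phi> (w 0) (coding_map \<phi> (shift w))"
proof -
  have "coding_map \<phi> w = ifs_comp \<phi> w 1 (coding_map \<phi> ((shift ^^ 1) w))" by (rule pi_comp[OF w])
  then show ?thesis by simp
qed

lemma phi_inj: assumes i: "i < K" shows "inj (\<phi> i)"
proof (rule injI)
  fix x y assume "\<phi> i x = \<phi> i y"
  then have "r * dist x y = 0" using sim[OF i, of x y] by simp
  then show "x = y" using r0 by simp
qed

lemma T_pi: assumes w: "w \<in> code_space K"
  shows "induced_map K \<phi> X (coding_map \<phi> w) = coding_map \<phi> (shift w)"
proof -
  have sw: "shift w \<in> code_space K" using cs_shift[OF w, of 1] by simp
  have w0: "w 0 < K" using w by (simp add: code_space_def)
  have mem: "coding_map \<phi> w \<in> \<phi> (w 0) ` X"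
    using pi_step[OF w] piX[OF sw] by (metis image_eqI)
  have "(THE i. i < K \<and> coding_map \<phi> w \<in> \<phi> i ` X) = w 0"
  proof (rule the_equality)
    show "w 0 < K \<and> coding_map \<phi> w \<in> \<phi> (w 0) ` X" using w0 mem by blast
    fix i assume i: "i < K \<and> coding_map \<phi> w \<in> \<phi> i ` X"
    show "i = w 0"
    proof (rule ccontr)
      assume "i \<noteq> w 0"
      then have "\<phi> i ` X \<inter> \<phi> (w 0) ` X = {}"
        using sep i w0 unfolding strong_separation_def by blast
      then show False using i mem by blast
    qed
  qed
  then have "induced_map K \<phi> X (coding_map \<phi> w) = inv (\<phi> (w 0)) (coding_map \<phi> w)"
    unfolding induced_map_def by simp
  also have "\<dots> = inv (\<phi> (w 0)) (\<phi> (w 0) (coding_map \<phi> (shift w)))"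
    using pi_step[OF w] by (rule arg_cong)
  also have "\<dots> = coding_map \<phi> (shift w)" by (rule inv_f_f[OF phi_inj[OF w0]])
  finally show ?thesis .
qed

lemma T_pow_pi: "w \<in> code_space K \<Longrightarrow>
   (induced_map K \<phi> X ^^ n) (coding_map \<phi> w) = coding_map \<phi> ((shift ^^ n) w)"
  by (induction n) (auto simp: T_pi cs_shift)

lemma surj_pi: assumes x: "x \<in> X" shows "\<exists>w\<in>code_space K. x = coding_map \<phi> w"
proof -
  have "\<forall>x\<in>X. \<exists>i. i < K \<and> (\<exists>y. y \<in> X \<and> x = \<phi> i y)" using Xeq by blast
  then obtain I Y where IY: "\<And>x. x \<in> X \<Longrightarrow> I x < K \<and> Y x \<in> X \<and> x = \<phi> (I x) (Y x)"
    by metis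
  define xs where "xs k = (Y ^^ k) x" for k
  define w where "w k = I (xs k)" for k
  have xsX: "xs k \<in> X" for k
  proof (induction k)
    case 0 then show ?case by (simp add: xs_def x)
  next
    case (Suc k)
    have "xs (Suc k) = Y (xs k)" by (simp add: xs_def)
    then show ?case using IY[OF Suc] by metis
  qed
  have "\<forall>k. w k < K" using IY[OF xsX] unfolding w_def by blast
  then have w: "w \<in> code_space K" by (simp add: code_space_def)
  have rep: "x = ifs_comp \<phi> w n (xs n)" for n
  proof (induction n)
    case 0 then show ?case by (simp add: xs_def)
  next
    case (Suc n)
    have "xs n = \<phi> (w n) (xs (Suc n))" using IY[OF xsX[of n]] unfolding w_def xs_def by (metis funpow.simps(2) comp_apply)
    then show ?case using Suc by simp
  qed
  have le: "dist (coding_map \<phi> w) x \<le> r ^ n * D" for n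
  proof -
    have "dist (coding_map \<phi> w) x = dist (ifs_comp \<phi> w n (coding_map \<phi> ((shift ^^ n) w))) (ifs_comp \<phi> w n (xs n))"
      using pi_comp[OF w, of n] rep[of n] by metis
    also have "\<dots> = r ^ n * dist (coding_map \<phi> ((shift ^^ n) w)) (xs n)" using comp_dist[OF w] by simp
    also have "\<dots> \<le> r ^ n * D"
      using Dle[OF piX[OF cs_shift[OF w]] xsX] r0 by (intro mult_left_mono) auto
    finally show ?thesis .
  qed
  have "dist (coding_map \<phi> w) x = 0"
  proof (rule ccontr)
    assume ne: "dist (coding_map \<phi> w) x \<noteq> 0"
    then have pos: "0 < dist (coding_map \<phi> w) x" by simp
    obtain n where n: "r ^ n < dist (coding_map \<phi> w) x / (D + 1)"
      using real_arch_pow_inv[of "dist (coding_map \<phi> w) x / (D + 1)" r] pos D0 r1 by auto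
    have "r ^ n * D \<le> r ^ n * (D + 1)" using r0 by simp
    also have "\<dots> < dist (coding_map \<phi> w) x" using n D0 by (simp add: field_simps)
    finally show False using le[of n] by simp
  qed
  then show ?thesis using w by auto
qed

lemma delta_ex: "\<exists>\<delta>>0. \<forall>i<K. \<forall>j<K. i \<noteq> j \<longrightarrow> (\<forall>x\<in>X. \<forall>y\<in>X. \<delta> \<le> dist (\<phi> i x) (\<phi> j y))"
proof -
  have cpt: "compact (\<phi> i ` X)" if "i < K" for i
  proof -
    have "r-lipschitz_on X (\<phi> i)" using sim[OF that] r0 by (intro lipschitz_onI) auto
    then show ?thesis using compact_continuous_image lipschitz_on_continuous_on Xcomp by blast
  qed
  have "\<exists>d>0. \<forall>x\<in>\<phi> i ` X. \<forall>y\<in>(\<Union>j\<in>{j. j < K \<and> j \<noteq> i}. \<phi> j ` X). d \<le> dist x y" if "i < K" for i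
  proof (rule separate_compact_closed)
    show "compact (\<phi> i ` X)" using cpt that by blast
    show "closed (\<Union>j\<in>{j. j < K \<and> j \<noteq> i}. \<phi> j ` X)"
      using cpt by (intro closed_UN compact_imp_closed) auto
    show "\<phi> i ` X \<inter> (\<Union>j\<in>{j. j < K \<and> j \<noteq> i}. \<phi> j ` X) = {}"
      using sep that unfolding strong_separation_def by blast
  qed
  then obtain d where d: "\<And>i. i < K \<Longrightarrow> d i > 0 \<and> (\<forall>x\<in>\<phi> i ` X. \<forall>y\<in>(\<Union>j\<in>{j. j < K \<and> j \<noteq> i}. \<phi> j ` X). d i \<le> dist x y)"
    by metis
  define \<delta> where "\<delta> = Min (d ` {..<K})"
  have "0 \<in> {..<K}" using K1 by simp
  then have ne: "d ` {..<K} \<noteq> {}" by blast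
  have "\<delta> > 0" unfolding \<delta>_def using ne d by (subst Min_gr_iff) auto
  moreover have "\<delta> \<le> d i" if "i < K" for i unfolding \<delta>_def using that by (intro Min_le) auto
  ultimately show ?thesis
  proof (intro exI[of _ \<delta>] conjI allI impI ballI)
    fix i j x y assume i: "i < K" and j: "j < K" and ij: "i \<noteq> j" and x: "x \<in> X" and y: "y \<in> X"
    assume dp: "0 < \<delta>" and dl: "\<And>i. i < K \<Longrightarrow> \<delta> \<le> d i"
    have "\<phi> i x \<in> \<phi> i ` X" using x by blast
    moreover have "\<phi> j y \<in> (\<Union>j\<in>{j. j < K \<and> j \<noteq> i}. \<phi> j ` X)" using y j ij by blast
    ultimately have "d i \<le> dist (\<phi> i x) (\<phi> j y)" using d[OF i] by blast
    then show "\<delta> \<le> dist (\<phi> i x) (\<phi> j y)" using dl[OF i] by linarith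
  qed
qed

lemma two_bounds:
  assumes v: "v \<in> code_space K" and w: "w \<in> code_space K" and vw: "v \<noteq> w"
    and \<delta>: "\<forall>i<K. \<forall>j<K. i \<noteq> j \<longrightarrow> (\<forall>x\<in>X. \<forall>y\<in>X. \<delta> \<le> dist (\<phi> i x) (\<phi> j y))"
  defines "k \<equiv> LEAST m. v m \<noteq> w m"
  shows "r ^ k * \<delta> \<le> dist (coding_map \<phi> v) (coding_map \<phi> w)"
    and "dist (coding_map \<phi> v) (coding_map \<phi> w) \<le> r ^ k * D"
proof -
  have ex: "\<exists>m. v m \<noteq> w m" using vw by auto
  have vk: "v k \<noteq> w k" unfolding k_def using LeastI_ex[OF ex] .
  have eq: "\<forall>m<k. v m = w m" unfolding k_def using not_less_Least by blast
  define v' where "v' = (shift ^^ k) v"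
  define w' where "w' = (shift ^^ k) w"
  have v': "v' \<in> code_space K" and w': "w' \<in> code_space K" using cs_shift v w v'_def w'_def by auto
  have pv: "coding_map \<phi> v = ifs_comp \<phi> w k (coding_map \<phi> v')"
    using pi_comp[OF v, of k] comp_cong[OF eq] unfolding v'_def by simp
  have pw: "coding_map \<phi> w = ifs_comp \<phi> w k (coding_map \<phi> w')"
    using pi_comp[OF w, of k] unfolding w'_def by simp
  have dd: "dist (coding_map \<phi> v) (coding_map \<phi> w) = r ^ k * dist (coding_map \<phi> v') (coding_map \<phi> w')"
    unfolding pv pw by (rule comp_dist[OF w])
  have sv: "shift v' \<in> code_space K" "shift w' \<in> code_space K"
    using cs_shift[OF v', of 1] cs_shift[OF w', of 1] by auto
  have v0: "v' 0 = v k" unfolding v'_def by (simp add: shift_pow)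
  have w0: "w' 0 = w k" unfolding w'_def by (simp add: shift_pow)
  have a: "coding_map \<phi> v' = \<phi> (v k) (coding_map \<phi> (shift v'))" using pi_step[OF v'] v0 by simp
  have b: "coding_map \<phi> w' = \<phi> (w k) (coding_map \<phi> (shift w'))" using pi_step[OF w'] w0 by simp
  have vkK: "v k < K" "w k < K" using v w by (auto simp: code_space_def)
  have "\<delta> \<le> dist (coding_map \<phi> v') (coding_map \<phi> w')"
    unfolding a b using \<delta> vkK vk piX[OF sv(1)] piX[OF sv(2)] by blast
  then show "r ^ k * \<delta> \<le> dist (coding_map \<phi> v) (coding_map \<phi> w)"
    unfolding dd using r0 by (simp add: mult_left_mono)
  show "dist (coding_map \<phi> v) (coding_map \<phi> w) \<le> r ^ k * D"
    unfolding dd using r0 Dle piX[OF v'] piX[OF w'] by (simp add: mult_left_mono)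
qed

end

theorem proposition7p1:
  fixes K :: nat and \<phi> :: "nat \<Rightarrow> 'a::euclidean_space \<Rightarrow> 'a" and r :: real and X :: "'a set"
  assumes "homogeneous_ifs K \<phi> r"
    and "self_similar_set K \<phi> X"
    and "strong_separation K \<phi> X"
  shows "\<exists>N::nat. \<forall>\<psi>::nat \<Rightarrow> real. (\<forall>n. 0 \<le> \<psi> n) \<longrightarrow>
      coding_map \<phi> ` sym_recurrence_set K (\<lambda>n. \<lfloor>\<psi> n\<rfloor> + int N) \<subseteq> recurrence_set K \<phi> r X \<psi> \<and>
      recurrence_set K \<phi> r X \<psi> \<subseteq> coding_map \<phi> ` sym_recurrence_set K (\<lambda>n. \<lfloor>\<psi> n\<rfloor> - int N)"
proof -
  interpret ssifs K \<phi> r X by (rule ssifs.intro[OF assms])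
  let ?T = "induced_map K \<phi> X"
  obtain \<delta> where \<delta>0: "\<delta> > 0" and \<delta>: "\<forall>i<K. \<forall>j<K. i \<noteq> j \<longrightarrow> (\<forall>x\<in>X. \<forall>y\<in>X. \<delta> \<le> dist (\<phi> i x) (\<phi> j y))"
    using delta_ex by blast
  obtain N1 where N1: "r ^ N1 < \<delta>" using real_arch_pow_inv[OF \<delta>0 r1] by blast
  have D1: "0 < 1 / (D + 1)" using D0 by simp
  obtain n0 where n0: "r ^ n0 < 1 / (D + 1)" using real_arch_pow_inv[OF D1 r1] by blast
  have n0D: "r ^ n0 * D \<le> 1"
  proof -
    have "r ^ n0 * D \<le> r ^ n0 * (D + 1)" using r0 by simp
    also have "\<dots> \<le> 1 / (D + 1) * (D + 1)"
      using n0 D0 by (intro mult_right_mono) auto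
    also have "\<dots> = 1" using D0 by simp
    finally show ?thesis .
  qed
  define N where "N = N1 + n0 + 1"
  have Kpos: "(1::real) \<le> real K" using K1 by simp
  show ?thesis
  proof (intro exI[of _ N] allI impI conjI subsetI)
    fix \<psi> :: "nat \<Rightarrow> real" assume \<psi>0: "\<forall>n. 0 \<le> \<psi> n"
    {
      fix y assume "y \<in> coding_map \<phi> ` sym_recurrence_set K (\<lambda>n. \<lfloor>\<psi> n\<rfloor> + int N)"
      then obtain w where w: "w \<in> code_space K" and y: "y = coding_map \<phi> w"
        and inf: "infinite {n. sym_dist K ((shift ^^ n) w) w \<le> real K powi (- (\<lfloor>\<psi> n\<rfloor> + int N))}"
        unfolding sym_recurrence_set_def by blast
      have sub: "{n. sym_dist K ((shift ^^ n) w) w \<le> real K powi (- (\<lfloor>\<psi> n\<rfloor> + int N))}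
          \<subseteq> {n. norm ((?T ^^ n) y - y) \<le> r powr \<psi> n}"
      proof
        fix n assume "n \<in> {n. sym_dist K ((shift ^^ n) w) w \<le> real K powi (- (\<lfloor>\<psi> n\<rfloor> + int N))}"
        then have sd: "sym_dist K ((shift ^^ n) w) w \<le> real K powi (- (\<lfloor>\<psi> n\<rfloor> + int N))" by simp
        define v where "v = (shift ^^ n) w"
        have vc: "v \<in> code_space K" unfolding v_def by (rule cs_shift[OF w])
        have Tn: "(?T ^^ n) y = coding_map \<phi> v" unfolding y v_def by (rule T_pow_pi[OF w])
        have "norm (coding_map \<phi> v - coding_map \<phi> w) \<le> r powr \<psi> n"
        proof (cases "v = w")
          case True then show ?thesis by simp
        next
          case False
          have K2: "K \<ge> 2"
          proof (rule ccontr)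
            assume "\<not> K \<ge> 2"
            then have "K = 1" using K1 by simp
            then have "\<forall>k. v k = 0 \<and> w k = 0" using vc w by (simp add: code_space_def)
            then have "v = w" by auto
            then show False using False by simp
          qed
          define k where "k = (LEAST m. v m \<noteq> w m)"
          have sd2: "real K powi (- int k) \<le> real K powi (- (\<lfloor>\<psi> n\<rfloor> + int N))"
            using sd False unfolding sym_dist_def v_def[symmetric] k_def by simp
          have kge: "int k \<ge> \<lfloor>\<psi> n\<rfloor> + int N"
          proof (rule ccontr)
            assume "\<not> ?thesis"
            then have "- (\<lfloor>\<psi> n\<rfloor> + int N) < - int k" by simp
            then have "real K powi (- (\<lfloor>\<psi> n\<rfloor> + int N)) < real K powi (- int k)"
              using K2 by (intro power_int_strict_increasing) auto
            then show False using sd2 by simp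
          qed
          have ub: "dist (coding_map \<phi> v) (coding_map \<phi> w) \<le> r ^ k * D"
            using two_bounds(2)[OF vc w False \<delta>] unfolding k_def .
          have "real k \<ge> \<psi> n + real n0"
          proof -
            have "real_of_int \<lfloor>\<psi> n\<rfloor> > \<psi> n - 1" by linarith
            moreover have "real_of_int (int k) \<ge> real_of_int (\<lfloor>\<psi> n\<rfloor> + int N)"
              using kge by linarith
            ultimately show ?thesis unfolding N_def by simp linarith
          qed
          then have "r powr real k \<le> r powr (\<psi> n + real n0)"
            using r0 r1 by (intro powr_mono') auto
          also have "\<dots> = r powr \<psi> n * r ^ n0" using r0 by (simp add: powr_add powr_realpow)
          finally have "r ^ k \<le> r powr \<psi> n * r ^ n0" using r0 by (simp add: powr_realpow)
          then have "r ^ k * D \<le> r powr \<psi> n * r ^ n0 * D" using D0 by (rule mult_right_mono)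
          also have "\<dots> = r powr \<psi> n * (r ^ n0 * D)" by simp
          also have "\<dots> \<le> r powr \<psi> n * 1" using n0D by (intro mult_left_mono) auto
          finally show ?thesis using ub by (simp add: dist_norm)
        qed
        then show "n \<in> {n. norm ((?T ^^ n) y - y) \<le> r powr \<psi> n}" using Tn y by simp
      qed
      have "infinite {n. norm ((?T ^^ n) y - y) \<le> r powr \<psi> n}"
        using infinite_super[OF sub inf] .
      moreover have "y \<in> X" using y piX[OF w] by simp
      ultimately show "y \<in> recurrence_set K \<phi> r X \<psi>" unfolding recurrence_set_def by blast
    }
    {
      fix x assume "x \<in> recurrence_set K \<phi> r X \<psi>"
      then have xX: "x \<in> X" and inf: "infinite {n. norm ((?T ^^ n) x - x) \<le> r powr \<psi> n}"
        unfolding recurrence_set_def by auto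
      obtain w where w: "w \<in> code_space K" and x: "x = coding_map \<phi> w" using surj_pi[OF xX] by blast
      have sub: "{n. norm ((?T ^^ n) x - x) \<le> r powr \<psi> n}
         \<subseteq> {n. sym_dist K ((shift ^^ n) w) w \<le> real K powi (- (\<lfloor>\<psi> n\<rfloor> - int N))}"
      proof
        fix n assume "n \<in> {n. norm ((?T ^^ n) x - x) \<le> r powr \<psi> n}"
        then have nm: "norm ((?T ^^ n) x - x) \<le> r powr \<psi> n" by simp
        define v where "v = (shift ^^ n) w"
        have vc: "v \<in> code_space K" unfolding v_def by (rule cs_shift[OF w])
        have Tn: "(?T ^^ n) x = coding_map \<phi> v" unfolding x v_def by (rule T_pow_pi[OF w])
        have "sym_dist K v w \<le> real K powi (- (\<lfloor>\<psi> n\<rfloor> - int N))"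
        proof (cases "v = w")
          case True then show ?thesis using Kpos by (simp add: sym_dist_def)
        next
          case False
          define k where "k = (LEAST m. v m \<noteq> w m)"
          have lb: "r ^ k * \<delta> \<le> dist (coding_map \<phi> v) (coding_map \<phi> w)"
            using two_bounds(1)[OF vc w False \<delta>] unfolding k_def .
          have dl: "dist (coding_map \<phi> v) (coding_map \<phi> w) \<le> r powr \<psi> n"
            using nm Tn x by (simp add: dist_norm)
          have kge: "int k \<ge> \<lfloor>\<psi> n\<rfloor> - int N"
          proof (rule ccontr)
            assume "\<not> ?thesis"
            then have "int (k + N + 1) \<le> \<lfloor>\<psi> n\<rfloor>" by simp
            then have "real (k + N + 1) \<le> \<psi> n" by linarith
            then have "r powr \<psi> n \<le> r powr real (k + N + 1)"
              using r0 r1 by (intro powr_mono') auto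
            also have "\<dots> = r ^ k * (r ^ N * r)" by (subst powr_realpow[OF r0]) (simp add: power_add mult_ac)
            also have "\<dots> < r ^ k * \<delta>"
            proof -
              have "r ^ N \<le> r ^ N1" unfolding N_def
                by (rule power_decreasing) (use r0 r1 in auto)
              moreover have "r ^ N * r \<le> r ^ N"
                using r0 r1 by (intro mult_right_le_one_le) auto
              ultimately have "r ^ N * r < \<delta>" using N1 by linarith
              then show ?thesis using r0 by simp
            qed
            finally show False using lb dl by simp
          qed
          have "real K powi (- int k) \<le> real K powi (- (\<lfloor>\<psi> n\<rfloor> - int N))"
            using kge Kpos by (intro power_int_increasing) auto
          then show ?thesis using False unfolding sym_dist_def k_def by simp
        qed
        then show "n \<in> {n. sym_dist K ((shift ^^ n) w) w \<le> real K powi (- (\<lfloor>\<psi> n\<rfloor> - int N))}"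
          unfolding v_def by simp
      qed
      have "w \<in> sym_recurrence_set K (\<lambda>n. \<lfloor>\<psi> n\<rfloor> - int N)"
        unfolding sym_recurrence_set_def using w infinite_super[OF sub inf] by simp
      then show "x \<in> coding_map \<phi> ` sym_recurrence_set K (\<lambda>n. \<lfloor>\<psi> n\<rfloor> - int N)"
        using x by blast
    }
  qed
qed

end
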